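(* Let $G$ be a non-amenable group and $m\in\mathbb{N}$. (i) If every $m$-generated subgroup of $G$ is amenable, then $\mathcal{T}(G)\geq m+3$. (ii) If every $m$-generated subgroup of $G$ is finite, then $\mathcal{T}(G)\geq 2m+4$.
   Context: A group $G$ admits a paradoxical decomposition if there exist positive integers $m,n$, pairwise disjoint subsets $P_1,\ldots,P_m,Q_1,\ldots,Q_n$ of $G$ and elements $g_1,\ldots,g_m,h_1,\ldots,h_n\in G$ with $G=\bigcup_iP_ig_i=\bigcup_jQ_jh_j$; this happens iff $G$ is non-amenable. The Tarski number $\mathcal{T}(G)$ is the minimal value of $m+n$. *)

theory Defs
  imports "HOL-Algebra.Algebra" "HOL-Library.Extended_Nat"
begin

definition amenable :: "('a, 'b) monoid_scheme \<Rightarrow> bool" where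
  "amenable G \<longleftrightarrow> (\<exists>\<mu> :: 'a set \<Rightarrow> real.
      (\<forall>A. A \<subseteq> carrier G \<longrightarrow> \<mu> A \<ge> 0)
    \<and> \<mu> (carrier G) = 1
    \<and> (\<forall>A B. A \<subseteq> carrier G \<longrightarrow> B \<subseteq> carrier G \<longrightarrow> A \<inter> B = {}
           \<longrightarrow> \<mu> (A \<union> B) = \<mu> A + \<mu> B)
    \<and> (\<forall>g A. g \<in> carrier G \<longrightarrow> A \<subseteq> carrier G \<longrightarrow> \<mu> (l_coset G g A) = \<mu> A))"

definition paradoxical_decomposition :: "('a, 'b) monoid_scheme \<Rightarrow> nat \<Rightarrow> nat \<Rightarrow> bool" where
  "paradoxical_decomposition G m n \<longleftrightarrow> m \<ge> 1 \<and> n \<ge> 1 \<and>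
    (\<exists>(P :: nat \<Rightarrow> 'a set) (Q :: nat \<Rightarrow> 'a set) (g :: nat \<Rightarrow> 'a) (h :: nat \<Rightarrow> 'a).
        (\<forall>i<m. P i \<subseteq> carrier G \<and> g i \<in> carrier G)
      \<and> (\<forall>j<n. Q j \<subseteq> carrier G \<and> h j \<in> carrier G)
      \<and> (\<forall>i<m. \<forall>i'<m. i \<noteq> i' \<longrightarrow> P i \<inter> P i' = {})
      \<and> (\<forall>j<n. \<forall>j'<n. j \<noteq> j' \<longrightarrow> Q j \<inter> Q j' = {})
      \<and> (\<forall>i<m. \<forall>j<n. P i \<inter> Q j = {})
      \<and> carrier G = (\<Union>i<m. r_coset G (P i) (g i))
      \<and> carrier G = (\<Union>j<n. r_coset G (Q j) (h j)))"

text \<open>Tarski number: minimal m+n; infinity if there is no paradoxical decomposition.\<close>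
definition tarski_number :: "('a, 'b) monoid_scheme \<Rightarrow> enat" where
  "tarski_number G = Inf {enat (m + n) | m n. paradoxical_decomposition G m n}"

definition m_generated_subgroup :: "('a, 'b) monoid_scheme \<Rightarrow> nat \<Rightarrow> 'a set \<Rightarrow> bool" where
  "m_generated_subgroup G m H \<longleftrightarrow>
     (\<exists>S. S \<subseteq> carrier G \<and> finite S \<and> card S \<le> m \<and> H = generate G S)"

end

theory Submission
  imports Defs
begin


locale fadd =
  fixes ff :: "'a set \<Rightarrow> real" and XX :: "'a set"
  assumes nn: "A \<subseteq> XX \<Longrightarrow> ff A \<ge> 0"
  and add: "A \<subseteq> XX \<Longrightarrow> B \<subseteq> XX \<Longrightarrow> A \<inter> B = {} \<Longrightarrow> ff (A \<union> B) = ff A + ff B"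
begin
lemma mono: "A \<subseteq> B \<Longrightarrow> B \<subseteq> XX \<Longrightarrow> ff A \<le> ff B"
proof -
  assume a: "A \<subseteq> B" "B \<subseteq> XX"
  have "B = A \<union> (B - A)" using a by auto
  hence "ff B = ff A + ff (B - A)" using add[of A "B - A"] a by auto
  moreover have "ff (B - A) \<ge> 0" using nn[of "B - A"] a by blast
  ultimately show ?thesis by simp
qed
lemma sub: "A \<subseteq> XX \<Longrightarrow> B \<subseteq> XX \<Longrightarrow> ff (A \<union> B) \<le> ff A + ff B"
proof -
  assume a: "A \<subseteq> XX" "B \<subseteq> XX"
  have "A \<union> B = A \<union> (B - A)" by auto
  hence "ff (A \<union> B) = ff A + ff (B - A)" using add[of A "B - A"] a by auto
  moreover have "ff (B - A) \<le> ff B" using mono a by auto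
  ultimately show ?thesis by simp
qed
lemma subU: fixes m :: nat shows "(\<forall>i<m. A i \<subseteq> XX) \<Longrightarrow> ff (\<Union>i<m. A i) \<le> (\<Sum>i<m. ff (A i))"
proof (induction m)
  case 0 then show ?case using add[of "{}" "{}"] by simp
next
  case (Suc m)
  have "(\<Union>i<Suc m. A i) = (\<Union>i<m. A i) \<union> A m" by (auto simp: lessThan_Suc)
  moreover have "ff ((\<Union>i<m. A i) \<union> A m) \<le> ff (\<Union>i<m. A i) + ff (A m)"
  proof (rule sub)
    show "(\<Union>i<m. A i) \<subseteq> XX" using Suc.prems(1) less_SucI by blast
    show "A m \<subseteq> XX" using Suc.prems by auto
  qed
  ultimately show ?case using Suc by simp
qed
lemma addU: fixes m :: nat shows "(\<forall>i<m. A i \<subseteq> XX) \<Longrightarrow> (\<forall>i<m. \<forall>j<m. i \<noteq> j \<longrightarrow> A i \<inter> A j = {})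
   \<Longrightarrow> ff (\<Union>i<m. A i) = (\<Sum>i<m. ff (A i))"
proof (induction m)
  case 0 then show ?case using add[of "{}" "{}"] by simp
next
  case (Suc m)
  have "(\<Union>i<Suc m. A i) = (\<Union>i<m. A i) \<union> A m" by (auto simp: lessThan_Suc)
  moreover have "ff ((\<Union>i<m. A i) \<union> A m) = ff (\<Union>i<m. A i) + ff (A m)"
  proof (rule add)
    show "(\<Union>i<m. A i) \<subseteq> XX" using Suc.prems(1) less_SucI by blast
    show "A m \<subseteq> XX" using Suc.prems by auto
    show "(\<Union>i<m. A i) \<inter> A m = {}"
    proof -
      have "\<And>i. i < m \<Longrightarrow> A i \<inter> A m = {}" using Suc.prems(2) by simp
      thus ?thesis by blast
    qed
  qed
  ultimately show ?case using Suc by simp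
qed
end

context group begin

lemma norm:
  assumes "0 < m" "\<forall>i<m. P i \<subseteq> carrier G \<and> g i \<in> carrier G" "carrier G = (\<Union>i<m. P i #> g i)"
  shows "carrier G = (\<Union>i<m. P i #> (g i \<otimes> inv g 0))"
proof
  have g0: "g 0 \<in> carrier G" using assms by auto
  show "carrier G \<subseteq> (\<Union>i<m. P i #> (g i \<otimes> inv g 0))"
  proof
    fix y assume y: "y \<in> carrier G"
    hence "y \<otimes> g 0 \<in> carrier G" using g0 by auto
    hence "y \<otimes> g 0 \<in> (\<Union>i<m. P i #> g i)" using assms(3) by blast
    then obtain i p where i: "i < m" "p \<in> P i" "y \<otimes> g 0 = p \<otimes> g i"
      unfolding r_coset_def by auto
    have p: "p \<in> carrier G" "g i \<in> carrier G" using i assms(2) by auto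
    have "y = (y \<otimes> g 0) \<otimes> inv g 0" using y g0 by (simp add: m_assoc)
    also have "\<dots> = p \<otimes> (g i \<otimes> inv g 0)" using i p g0 by (simp add: m_assoc)
    finally show "y \<in> (\<Union>i<m. P i #> (g i \<otimes> inv g 0))" using i unfolding r_coset_def by auto
  qed
  show "(\<Union>i<m. P i #> (g i \<otimes> inv g 0)) \<subseteq> carrier G"
    using assms(2) g0 unfolding r_coset_def by auto
qed

lemma restr:
  assumes "subgroup K G" "\<forall>i<m. P i \<subseteq> carrier G \<and> g i \<in> K" "carrier G = (\<Union>i<m. P i #> g i)"
    "x \<in> carrier G"
  shows "x <# K \<subseteq> (\<Union>i<m. (P i \<inter> (x <# K)) #> g i)"
proof
  fix y assume y: "y \<in> x <# K"
  then obtain k where k: "k \<in> K" "y = x \<otimes> k" unfolding l_coset_def by auto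
  have kc: "k \<in> carrier G" using k assms(1) subgroup.subset by blast
  have yc: "y \<in> carrier G" using k kc assms(4) by auto
  then obtain i p where i: "i < m" "p \<in> P i" "y = p \<otimes> g i"
    using assms(3) unfolding r_coset_def by auto
  have gK: "g i \<in> K" using i assms(2) by auto
  have gc: "g i \<in> carrier G" using gK assms(1) subgroup.subset by blast
  have pc: "p \<in> carrier G" using i assms(2) by auto
  have "p = y \<otimes> inv g i" using i pc gc by (simp add: m_assoc)
  also have "\<dots> = x \<otimes> (k \<otimes> inv g i)" using k kc gc assms(4) by (simp add: m_assoc)
  finally have "p \<in> x <# K" using k gK assms(1) unfolding l_coset_def
    by (auto intro: subgroup.m_closed subgroup.m_inv_closed)
  thus "y \<in> (\<Union>i<m. (P i \<inter> (x <# K)) #> g i)" using i unfolding r_coset_def by auto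
qed

end


context group begin

lemma rcos_img: "A #> g = (\<lambda>a. a \<otimes> g) ` A" unfolding r_coset_def by auto

lemma card_rcos: assumes "A \<subseteq> carrier G" "g \<in> carrier G" shows "card (A #> g) = card A"
proof -
  have "inj_on (\<lambda>a. a \<otimes> g) A" using assms by (intro inj_onI) (metis r_cancel subsetD)
  thus ?thesis unfolding rcos_img by (rule card_image)
qed

lemma fin_cover: fixes m :: nat
  assumes K: "subgroup K G" "finite K" and Pg: "\<forall>i<m. P i \<subseteq> carrier G \<and> g i \<in> K"
    and disj: "\<forall>i<m. \<forall>i'<m. i \<noteq> i' \<longrightarrow> P i \<inter> P i' = {}"
    and cov: "carrier G = (\<Union>i<m. P i #> g i)" and x: "x \<in> carrier G"
  shows "x \<in> (\<Union>i<m. P i)"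
proof -
  define C where "C = x <# K"
  define A where "A i = P i \<inter> C" for i
  have finC: "finite C" unfolding C_def l_coset_def using K by auto
  have gc: "\<And>i. i < m \<Longrightarrow> g i \<in> carrier G" using Pg K(1) subgroup.subset by blast
  have sub: "C \<subseteq> (\<Union>i<m. A i #> g i)" unfolding C_def A_def using restr[OF K(1) Pg cov x] .
  have finA: "\<And>i. finite (A i)" unfolding A_def using finC by auto
  have "card C \<le> card (\<Union>i<m. A i #> g i)"
  proof (rule card_mono)
    show "finite (\<Union>i<m. A i #> g i)" unfolding rcos_img using finA by (intro finite_UN_I) auto
  qed (rule sub)
  also have "\<dots> \<le> (\<Sum>i<m. card (A i #> g i))" by (rule card_UN_le) simp
  also have "\<dots> = (\<Sum>i<m. card (A i))"
    using Pg gc by (intro sum.cong refl card_rcos) (auto simp: A_def)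
  also have "\<dots> = card (\<Union>i<m. A i)"
    using finA disj by (intro card_UN_disjoint[symmetric]) (auto simp: A_def)
  finally have le: "card C \<le> card (\<Union>i<m. A i)" .
  have "(\<Union>i<m. A i) \<subseteq> C" unfolding A_def by auto
  hence eq: "(\<Union>i<m. A i) = C" using le finC card_seteq by blast
  have "x \<in> C" unfolding C_def l_coset_def using x K(1) subgroup.one_closed[OF K(1)] by force
  thus ?thesis using eq unfolding A_def by auto
qed

end


context group begin

lemma amen_contra:
  fixes m n :: nat
  assumes H: "subgroup H G" and am: "amenable (G\<lparr>carrier := H\<rparr>)"
    and m: "0 < m" and n: "0 < n"
    and Pg: "\<forall>i<m. P i \<subseteq> carrier G \<and> g i \<in> H"
    and Qh: "\<forall>j<n. Q j \<subseteq> carrier G \<and> h j \<in> H"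
    and dP: "\<forall>i<m. \<forall>i'<m. i \<noteq> i' \<longrightarrow> P i \<inter> P i' = {}"
    and dQ: "\<forall>j<n. \<forall>j'<n. j \<noteq> j' \<longrightarrow> Q j \<inter> Q j' = {}"
    and dPQ: "\<forall>i<m. \<forall>j<n. P i \<inter> Q j = {}"
    and covP: "carrier G = (\<Union>i<m. P i #> g i)"
    and covQ: "carrier G = (\<Union>j<n. Q j #> h j)"
  shows False
proof -
  have Hc: "H \<subseteq> carrier G" using H subgroup.subset by blast
  obtain \<mu> :: "'a set \<Rightarrow> real" where
    nn: "\<And>A. A \<subseteq> H \<Longrightarrow> \<mu> A \<ge> 0" and one: "\<mu> H = 1"
    and ad: "\<And>A B. A \<subseteq> H \<Longrightarrow> B \<subseteq> H \<Longrightarrow> A \<inter> B = {} \<Longrightarrow> \<mu> (A \<union> B) = \<mu> A + \<mu> B"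
    and inv: "\<And>c A. c \<in> H \<Longrightarrow> A \<subseteq> H \<Longrightarrow> \<mu> (c <# A) = \<mu> A"
  proof -
    have c: "carrier (G\<lparr>carrier := H\<rparr>) = H" by simp
    have ex: "\<exists>\<mu> :: 'a set \<Rightarrow> real. (\<forall>A. A \<subseteq> H \<longrightarrow> \<mu> A \<ge> 0) \<and> \<mu> H = 1
      \<and> (\<forall>A B. A \<subseteq> H \<longrightarrow> B \<subseteq> H \<longrightarrow> A \<inter> B = {} \<longrightarrow> \<mu> (A \<union> B) = \<mu> A + \<mu> B)
      \<and> (\<forall>c A. c \<in> H \<longrightarrow> A \<subseteq> H \<longrightarrow> \<mu> (l_coset (G\<lparr>carrier := H\<rparr>) c A) = \<mu> A)"
      using am unfolding amenable_def c .
    then obtain \<mu> :: "'a set \<Rightarrow> real" where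
      a1: "\<forall>A. A \<subseteq> H \<longrightarrow> \<mu> A \<ge> 0" and a2: "\<mu> H = 1"
      and a3: "\<forall>A B. A \<subseteq> H \<longrightarrow> B \<subseteq> H \<longrightarrow> A \<inter> B = {} \<longrightarrow> \<mu> (A \<union> B) = \<mu> A + \<mu> B"
      and a4: "\<forall>c A. c \<in> H \<longrightarrow> A \<subseteq> H \<longrightarrow> \<mu> (l_coset (G\<lparr>carrier := H\<rparr>) c A) = \<mu> A"
      by (elim exE conjE)
    have "l_coset (G\<lparr>carrier := H\<rparr>) c A = l_coset G c A" for c A
      unfolding l_coset_def by simp
    hence a5: "\<forall>c A. c \<in> H \<longrightarrow> A \<subseteq> H \<longrightarrow> \<mu> (l_coset G c A) = \<mu> A" using a4 by simp
    show ?thesis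
    proof (rule that[of \<mu>])
      fix A assume "A \<subseteq> H" thus "\<mu> A \<ge> 0" using a1 by blast
    next
      show "\<mu> H = 1" by (rule a2)
    next
      fix A B assume "A \<subseteq> H" "B \<subseteq> H" "A \<inter> B = {}"
      thus "\<mu> (A \<union> B) = \<mu> A + \<mu> B" using a3 by blast
    next
      fix c A assume "c \<in> H" "A \<subseteq> H"
      thus "\<mu> (l_coset G c A) = \<mu> A" using a5 by blast
    qed
  qed
  define \<nu> where "\<nu> A = \<mu> (m_inv G ` A)" for A
  have invH: "\<And>A. A \<subseteq> H \<Longrightarrow> m_inv G ` A \<subseteq> H" by (auto intro: subgroup.m_inv_closed[OF H])
  interpret fadd \<nu> H
  proof
    fix A B assume A: "A \<subseteq> H" and B: "B \<subseteq> H"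
    show "\<nu> A \<ge> 0" unfolding \<nu>_def by (rule nn[OF invH[OF A]])
    assume d: "A \<inter> B = {}"
    have "m_inv G ` A \<inter> m_inv G ` B = {}"
    proof (rule ccontr)
      assume "m_inv G ` A \<inter> m_inv G ` B \<noteq> {}"
      then obtain y where y: "y \<in> m_inv G ` A \<inter> m_inv G ` B" unfolding ex_in_conv[symmetric] by (elim exE)
      from IntD1[OF y] obtain a where a: "a \<in> A" "y = m_inv G a" by (rule imageE)
      from IntD2[OF y] obtain b where b: "b \<in> B" "y = m_inv G b" by (rule imageE)
      have ab: "a \<in> A" "b \<in> B" "inv a = inv b" using a b by simp_all
      have ac: "a \<in> carrier G" "b \<in> carrier G" using A B Hc ab by auto
      have "inv (inv a) = inv (inv b)" using ab(3) by simp
      hence "a = b" using ac by (simp add: inv_inv)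
      thus False using ab d by auto
    qed
    thus "\<nu> (A \<union> B) = \<nu> A + \<nu> B" unfolding \<nu>_def image_Un by (rule ad[OF invH[OF A] invH[OF B]])
  qed
  have invHH: "m_inv G ` H = H"
  proof
    show "m_inv G ` H \<subseteq> H" using invH by blast
    show "H \<subseteq> m_inv G ` H"
    proof
      fix x assume "x \<in> H"
      hence "x = inv (inv x)" "inv x \<in> H" using Hc subgroup.m_inv_closed[OF H] by (auto simp: inv_inv)
      thus "x \<in> m_inv G ` H" by blast
    qed
  qed
  have nuH: "\<nu> H = 1" unfolding \<nu>_def invHH one ..
  have tr: "\<nu> (A #> c) = \<nu> A" if A: "A \<subseteq> H" and c: "c \<in> H" for A c
  proof -
    have "m_inv G ` (A #> c) = inv c <# (m_inv G ` A)"
    proof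
      show "m_inv G ` (A #> c) \<subseteq> inv c <# (m_inv G ` A)"
        unfolding r_coset_def l_coset_def using A c Hc by (auto simp: inv_mult_group subsetD)
      show "inv c <# (m_inv G ` A) \<subseteq> m_inv G ` (A #> c)"
      proof
        fix z assume "z \<in> inv c <# (m_inv G ` A)"
        then obtain x where x: "x \<in> A" "z = inv c \<otimes> inv x" unfolding l_coset_def by blast
        have xc: "x \<in> carrier G" "c \<in> carrier G" using x A c Hc by auto
        have "z = inv (x \<otimes> c)" using x xc by (simp add: inv_mult_group)
        moreover have "x \<otimes> c \<in> A #> c" using x unfolding r_coset_def by blast
        ultimately show "z \<in> m_inv G ` (A #> c)" by blast
      qed
    qed
    hence "\<nu> (A #> c) = \<mu> (inv c <# (m_inv G ` A))" unfolding \<nu>_def by simp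
    also have "\<dots> = \<mu> (m_inv G ` A)" by (rule inv[OF subgroup.m_inv_closed[OF H c] invH[OF A]])
    finally show ?thesis unfolding \<nu>_def .
  qed
  have key: "\<nu> H \<le> \<nu> (\<Union>i<k. R i \<inter> H)"
    if Rf: "\<forall>i<k. R i \<subseteq> carrier G \<and> f i \<in> H" and cov: "carrier G = (\<Union>i<k. R i #> f i)"
      and dR: "\<forall>i<k. \<forall>i'<k. i \<noteq> i' \<longrightarrow> R i \<inter> R i' = {}" for k :: nat and R f
  proof -
    have "\<one> <# H \<subseteq> (\<Union>i<k. (R i \<inter> (\<one> <# H)) #> f i)" by (rule restr[OF H Rf cov one_closed])
    hence sub: "H \<subseteq> (\<Union>i<k. (R i \<inter> H) #> f i)" using lcos_mult_one[OF Hc] by simp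
    have sub2: "(\<Union>i<k. (R i \<inter> H) #> f i) \<subseteq> H"
    proof
      fix y assume "y \<in> (\<Union>i<k. (R i \<inter> H) #> f i)"
      then obtain i x where "i < k" "x \<in> R i \<inter> H" "y = x \<otimes> f i" unfolding r_coset_def by blast
      thus "y \<in> H" using Rf subgroup.m_closed[OF H] by auto
    qed
    have "\<nu> H \<le> \<nu> (\<Union>i<k. (R i \<inter> H) #> f i)" by (rule mono[OF sub sub2])
    also have "\<dots> \<le> (\<Sum>i<k. \<nu> ((R i \<inter> H) #> f i))"
      using sub2 by (intro subU) auto
    also have "\<dots> = (\<Sum>i<k. \<nu> (R i \<inter> H))" using Rf by (intro sum.cong refl tr) auto
    also have "\<dots> = \<nu> (\<Union>i<k. R i \<inter> H)" using dR by (intro addU[symmetric]) auto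
    finally show ?thesis .
  qed
  have k1: "\<nu> H \<le> \<nu> (\<Union>i<m. P i \<inter> H)" by (rule key[OF Pg covP dP])
  have k2: "\<nu> H \<le> \<nu> (\<Union>j<n. Q j \<inter> H)" by (rule key[OF Qh covQ dQ])
  have "\<nu> ((\<Union>i<m. P i \<inter> H) \<union> (\<Union>j<n. Q j \<inter> H)) = \<nu> (\<Union>i<m. P i \<inter> H) + \<nu> (\<Union>j<n. Q j \<inter> H)"
    using dPQ by (intro add) auto
  moreover have "\<nu> ((\<Union>i<m. P i \<inter> H) \<union> (\<Union>j<n. Q j \<inter> H)) \<le> \<nu> H" by (intro mono) auto
  ultimately show False using k1 k2 nuH by linarith
qed

end



lemma pd_E:
  assumes "paradoxical_decomposition G m n"
  obtains P g Q h where "1 \<le> m" "1 \<le> n"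
    "\<forall>i<m. P i \<subseteq> carrier G \<and> g i \<in> carrier G"
    "\<forall>j<n. Q j \<subseteq> carrier G \<and> h j \<in> carrier G"
    "\<forall>i<m. \<forall>i'<m. i \<noteq> i' \<longrightarrow> P i \<inter> P i' = {}"
    "\<forall>j<n. \<forall>j'<n. j \<noteq> j' \<longrightarrow> Q j \<inter> Q j' = {}"
    "\<forall>i<m. \<forall>j<n. P i \<inter> Q j = {}"
    "carrier G = (\<Union>i<m. r_coset G (P i) (g i))"
    "carrier G = (\<Union>j<n. r_coset G (Q j) (h j))"
  using assms unfolding paradoxical_decomposition_def by (elim conjE exE) (rule that; assumption)

lemma pd_sym: assumes pd: "paradoxical_decomposition G m n" shows "paradoxical_decomposition G n m"
proof -
  obtain P g Q h where f: "1 \<le> m" "1 \<le> n"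
    "\<forall>i<m. P i \<subseteq> carrier G \<and> g i \<in> carrier G"
    "\<forall>j<n. Q j \<subseteq> carrier G \<and> h j \<in> carrier G"
    "\<forall>i<m. \<forall>i'<m. i \<noteq> i' \<longrightarrow> P i \<inter> P i' = {}"
    "\<forall>j<n. \<forall>j'<n. j \<noteq> j' \<longrightarrow> Q j \<inter> Q j' = {}"
    "\<forall>i<m. \<forall>j<n. P i \<inter> Q j = {}"
    "carrier G = (\<Union>i<m. r_coset G (P i) (g i))"
    "carrier G = (\<Union>j<n. r_coset G (Q j) (h j))"
    by (rule pd_E[OF pd])
  have s: "\<forall>j<n. \<forall>i<m. Q j \<inter> P i = {}" using f(7) by (simp add: Int_commute)
  show ?thesis unfolding paradoxical_decomposition_def
    apply (intro conjI f(1) f(2))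
    apply (rule exI[of _ Q], rule exI[of _ P], rule exI[of _ h], rule exI[of _ g])
    apply (intro conjI f(3) f(4) f(5) f(6) f(8) f(9) s)
    done
qed

lemma tn_ge: assumes "\<And>m n. paradoxical_decomposition G m n \<Longrightarrow> k \<le> m + n"
  shows "enat k \<le> tarski_number G"
  unfolding tarski_number_def using assms by (auto intro!: Inf_greatest)

context group begin

lemma part1:
  assumes pd: "paradoxical_decomposition G m n"
    and hyp: "\<forall>H. m_generated_subgroup G M H \<longrightarrow> amenable (G\<lparr>carrier := H\<rparr>)"
  shows "M + 3 \<le> m + n"
proof (rule ccontr)
  assume le: "\<not> M + 3 \<le> m + n"
  obtain P Q g h where m: "1 \<le> m" and n: "1 \<le> n"
    and Pg: "\<forall>i<m. P i \<subseteq> carrier G \<and> g i \<in> carrier G"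
    and Qh: "\<forall>j<n. Q j \<subseteq> carrier G \<and> h j \<in> carrier G"
    and dP: "\<forall>i<m. \<forall>i'<m. i \<noteq> i' \<longrightarrow> P i \<inter> P i' = {}"
    and dQ: "\<forall>j<n. \<forall>j'<n. j \<noteq> j' \<longrightarrow> Q j \<inter> Q j' = {}"
    and dPQ: "\<forall>i<m. \<forall>j<n. P i \<inter> Q j = {}"
    and covP: "carrier G = (\<Union>i<m. r_coset G (P i) (g i))"
    and covQ: "carrier G = (\<Union>j<n. r_coset G (Q j) (h j))"
    by (rule pd_E[OF pd])
  define g' where "g' i = g i \<otimes> inv g 0" for i
  define h' where "h' j = h j \<otimes> inv h 0" for j
  have covP': "carrier G = (\<Union>i<m. P i #> g' i)" unfolding g'_def using norm[OF _ Pg covP] m by simp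
  have covQ': "carrier G = (\<Union>j<n. Q j #> h' j)" unfolding h'_def using norm[OF _ Qh covQ] n by simp
  have g0: "g 0 \<in> carrier G" "h 0 \<in> carrier G" using Pg Qh m n by auto
  define S where "S = g' ` {1..<m} \<union> h' ` {1..<n}"
  have Sc: "S \<subseteq> carrier G" unfolding S_def g'_def h'_def using Pg Qh g0 by auto
  have "card S \<le> card (g' ` {1..<m}) + card (h' ` {1..<n})" unfolding S_def by (rule card_Un_le)
  also have "\<dots> \<le> card {1..<m} + card {1..<n}" by (intro add_mono card_image_le) auto
  also have "\<dots> \<le> M" using le m n by simp
  finally have cS: "card S \<le> M" .
  define H where "H = generate G S"
  have fS: "finite S" unfolding S_def by simp
  have mg: "m_generated_subgroup G M H" unfolding m_generated_subgroup_def H_def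
    using Sc fS cS by blast
  have sg: "subgroup H G" unfolding H_def by (rule generate_is_subgroup[OF Sc])
  have gH: "g' i \<in> H" if "i < m" for i
  proof (cases "i = 0")
    case True thus ?thesis unfolding g'_def H_def using g0 generate.one[of G S] by simp
  next
    case False thus ?thesis unfolding H_def S_def using that by (intro generate.incl) auto
  qed
  have hH: "h' j \<in> H" if "j < n" for j
  proof (cases "j = 0")
    case True thus ?thesis unfolding h'_def H_def using g0 generate.one[of G S] by simp
  next
    case False thus ?thesis unfolding H_def S_def using that by (intro generate.incl) auto
  qed
  show False
    by (rule amen_contra[OF sg hyp[rule_format, OF mg], of m n P g' Q h'])
       (use m n Pg Qh gH hH dP dQ dPQ covP' covQ' in auto)
qed

lemma part2:
  assumes pd: "paradoxical_decomposition G m n" and mM: "m \<le> M + 1"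
    and hyp: "\<forall>H. m_generated_subgroup G M H \<longrightarrow> finite H"
  shows False
proof -
  obtain P Q g h where m: "1 \<le> m" and n: "1 \<le> n"
    and Pg: "\<forall>i<m. P i \<subseteq> carrier G \<and> g i \<in> carrier G"
    and Qh: "\<forall>j<n. Q j \<subseteq> carrier G \<and> h j \<in> carrier G"
    and dP: "\<forall>i<m. \<forall>i'<m. i \<noteq> i' \<longrightarrow> P i \<inter> P i' = {}"
    and dQ: "\<forall>j<n. \<forall>j'<n. j \<noteq> j' \<longrightarrow> Q j \<inter> Q j' = {}"
    and dPQ: "\<forall>i<m. \<forall>j<n. P i \<inter> Q j = {}"
    and covP: "carrier G = (\<Union>i<m. r_coset G (P i) (g i))"
    and covQ: "carrier G = (\<Union>j<n. r_coset G (Q j) (h j))"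
    by (rule pd_E[OF pd])
  define g' where "g' i = g i \<otimes> inv g 0" for i
  have covP': "carrier G = (\<Union>i<m. P i #> g' i)" unfolding g'_def using norm[OF _ Pg covP] m by simp
  have g0: "g 0 \<in> carrier G" using Pg m by auto
  define S where "S = g' ` {1..<m}"
  have Sc: "S \<subseteq> carrier G" unfolding S_def g'_def using Pg g0 by auto
  have "card S \<le> card {1..<m}" unfolding S_def by (rule card_image_le) auto
  also have "\<dots> \<le> M" using mM by simp
  finally have cS: "card S \<le> M" .
  define K where "K = generate G S"
  have fS: "finite S" unfolding S_def by simp
  have mg: "m_generated_subgroup G M K" unfolding m_generated_subgroup_def K_def
    using Sc fS cS by blast
  have sg: "subgroup K G" unfolding K_def by (rule generate_is_subgroup[OF Sc])
  have fK: "finite K" using hyp mg by blast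
  have gK: "g' i \<in> K" if "i < m" for i
  proof (cases "i = 0")
    case True thus ?thesis unfolding g'_def K_def using g0 generate.one[of G S] by simp
  next
    case False thus ?thesis unfolding K_def S_def using that by (intro generate.incl) auto
  qed
  have allP: "x \<in> (\<Union>i<m. P i)" if "x \<in> carrier G" for x
    by (rule fin_cover[OF sg fK _ dP covP' that]) (use Pg gK in auto)
  have "\<one> \<in> (\<Union>j<n. Q j #> h j)" using covQ by (metis one_closed)
  then obtain j q where j: "j < n" "q \<in> Q j" unfolding r_coset_def by auto
  have "q \<in> carrier G" using j Qh by auto
  then obtain i where "i < m" "q \<in> P i" using allP by blast
  thus False using j dPQ by blast
qed

end

theorem corollary4p2:
  fixes G :: "('a, 'b) monoid_scheme" and m :: nat
  assumes "group G" and "\<not> amenable G"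
  shows "((\<forall>H. m_generated_subgroup G m H \<longrightarrow> amenable (G\<lparr>carrier := H\<rparr>))
            \<longrightarrow> tarski_number G \<ge> enat (m + 3))
       \<and> ((\<forall>H. m_generated_subgroup G m H \<longrightarrow> finite H)
            \<longrightarrow> tarski_number G \<ge> enat (2 * m + 4))"
proof (intro conjI impI)
  assume hyp: "\<forall>H. m_generated_subgroup G m H \<longrightarrow> amenable (G\<lparr>carrier := H\<rparr>)"
  show "tarski_number G \<ge> enat (m + 3)"
    by (rule tn_ge) (rule group.part1[OF assms(1) _ hyp])
next
  assume hyp: "\<forall>H. m_generated_subgroup G m H \<longrightarrow> finite H"
  show "tarski_number G \<ge> enat (2 * m + 4)"
  proof (rule tn_ge, rule ccontr)
    fix a b assume pd: "paradoxical_decomposition G a b" and "\<not> 2 * m + 4 \<le> a + b"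
    hence "a \<le> m + 1 \<or> b \<le> m + 1" by linarith
    thus False
    proof
      assume "a \<le> m + 1" thus False using group.part2[OF assms(1) pd _ hyp] by blast
    next
      assume "b \<le> m + 1" thus False using group.part2[OF assms(1) pd_sym[OF pd] _ hyp] by blast
    qed
  qed
qed


end
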